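(* There is a computable Friedberg enumeration $(\mathcal{G}_n)_{n\in\omega}$ of $FUG$ such that whenever $\mathcal{G}\cong\mathcal{G}_m$ and $\mathcal{G}'\cong\mathcal{G}_n$, where $\mathcal{G}'$ is a proper extension of $\mathcal{G}$ (i.e. $\mathcal{G}\subsetneq\mathcal{G}'$ as substructures), we have $m<n$.
   Context: $FUG$ is the class of finite undirected graphs (language $\{E\}$, $E$ irreflexive and symmetric) with universe a subset of $\omega$, closed under isomorphism. $D(\mathcal{A})$ is the atomic diagram of $\mathcal{A}$ (atomic sentences and their negations true in $\mathcal{A}$, elements used as constants, identified with Gödel numbers). A computable enumeration of a class $K$ is a c.e. set $\mathcal{E}$ of pairs $(n,\varphi)$, $n\in\omega$, $\varphi$ an atomic sentence or negation of one, such that (a) for each $n$, $\{\varphi:(n,\varphi)\in\mathcal{E}\}=D(\mathcal{A}_n)$ for some $\mathcal{A}_n\in K$, and (b) every $\mathcal{A}\in K$ is isomorphic to some $\mathcal{A}_n$; it is written $(\mathcal{A}_n)_{n\in\omega}$. It is Friedberg if each isomorphism type in $K$ is represented by exactly one $n$. *)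

theory Defs
  imports Main "HOL-Library.Nat_Bijection"
begin

datatype recf =
    Z
  | S
  | Proj nat
  | Cn recf "recf list"
  | Pr recf recf
  | Mn recf

inductive eval :: "recf \<Rightarrow> nat list \<Rightarrow> nat \<Rightarrow> bool" where
  eval_Z: "eval Z xs 0"
| eval_S: "eval S (x # xs) (Suc x)"
| eval_Proj: "i < length xs \<Longrightarrow> eval (Proj i) xs (xs ! i)"
| eval_Cn: "length ys = length gs \<Longrightarrow> (\<forall>j < length gs. eval (gs ! j) xs (ys ! j))
            \<Longrightarrow> eval f ys y \<Longrightarrow> eval (Cn f gs) xs y"
| eval_Pr0: "eval f xs y \<Longrightarrow> eval (Pr f g) (0 # xs) y"
| eval_PrSuc: "eval (Pr f g) (n # xs) r \<Longrightarrow> eval g (n # r # xs) y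
            \<Longrightarrow> eval (Pr f g) (Suc n # xs) y"
| eval_Mn: "eval f (y # xs) 0 \<Longrightarrow> (\<forall>z < y. \<exists>v. v > 0 \<and> eval f (z # xs) v)
            \<Longrightarrow> eval (Mn f) xs y"

definition ce :: "nat set \<Rightarrow> bool" where
  "ce A \<longleftrightarrow> (\<exists>f. \<forall>x. x \<in> A \<longleftrightarrow> (\<exists>y. eval f [x] y))"

datatype atom = AEq nat nat | AE nat nat
datatype literal = Pos atom | Neg atom

fun atom_code :: "atom \<Rightarrow> nat" where
  "atom_code (AEq a b) = 2 * prod_encode (a, b)"
| "atom_code (AE a b) = 2 * prod_encode (a, b) + 1"

fun lit_code :: "literal \<Rightarrow> nat" where
  "lit_code (Pos a) = 2 * atom_code a"
| "lit_code (Neg a) = 2 * atom_code a + 1"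

definition pair_code :: "nat \<times> literal \<Rightarrow> nat" where
  "pair_code p = prod_encode (fst p, lit_code (snd p))"

type_synonym graph = "nat set \<times> (nat \<times> nat) set"

definition fug :: "graph \<Rightarrow> bool" where
  "fug G \<longleftrightarrow> finite (fst G) \<and> fst G \<noteq> {} \<and> snd G \<subseteq> fst G \<times> fst G
            \<and> irrefl (snd G) \<and> sym (snd G)"

definition diag :: "graph \<Rightarrow> literal set" where
  "diag G = {Pos (AEq a b) | a b. a \<in> fst G \<and> b \<in> fst G \<and> a = b}
          \<union> {Neg (AEq a b) | a b. a \<in> fst G \<and> b \<in> fst G \<and> a \<noteq> b}
          \<union> {Pos (AE a b) | a b. a \<in> fst G \<and> b \<in> fst G \<and> (a, b) \<in> snd G}
          \<union> {Neg (AE a b) | a b. a \<in> fst G \<and> b \<in> fst G \<and> (a, b) \<notin> snd G}"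

definition graph_iso :: "graph \<Rightarrow> graph \<Rightarrow> bool" where
  "graph_iso G H \<longleftrightarrow> (\<exists>f. bij_betw f (fst G) (fst H) \<and>
      (\<forall>a\<in>fst G. \<forall>b\<in>fst G. (a, b) \<in> snd G \<longleftrightarrow> (f a, f b) \<in> snd H))"

definition substructure :: "graph \<Rightarrow> graph \<Rightarrow> bool" where
  "substructure G H \<longleftrightarrow> fst G \<subseteq> fst H \<and> snd G = snd H \<inter> (fst G \<times> fst G)"

definition proper_substructure :: "graph \<Rightarrow> graph \<Rightarrow> bool" where
  "proper_substructure G H \<longleftrightarrow> substructure G H \<and> G \<noteq> H"

definition computable_enumeration_FUG :: "(nat \<times> literal) set \<Rightarrow> (nat \<Rightarrow> graph) \<Rightarrow> bool" where
  "computable_enumeration_FUG Enum Gs \<longleftrightarrow>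
     ce (pair_code ` Enum)
   \<and> (\<forall>n. fug (Gs n) \<and> {\<phi>. (n, \<phi>) \<in> Enum} = diag (Gs n))
   \<and> (\<forall>G. fug G \<longrightarrow> (\<exists>n. graph_iso G (Gs n)))"

definition friedberg_FUG :: "(nat \<times> literal) set \<Rightarrow> (nat \<Rightarrow> graph) \<Rightarrow> bool" where
  "friedberg_FUG Enum Gs \<longleftrightarrow> computable_enumeration_FUG Enum Gs
     \<and> (\<forall>G. fug G \<longrightarrow> (\<exists>!n. graph_iso G (Gs n)))"

end

theory Submission
  imports Defs
begin


lemma eval_det: "eval f xs y \<Longrightarrow> eval f xs y' \<Longrightarrow> y = y'"
proof (induction arbitrary: y' rule: eval.induct)
  case (eval_Z xs) from eval_Z.prems show ?case by (cases rule: eval.cases) auto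
next
  case (eval_S x xs) from eval_S.prems show ?case by (cases rule: eval.cases) auto
next
  case (eval_Proj i xs) from eval_Proj.prems show ?case by (cases rule: eval.cases) auto
next
  case (eval_Cn ys gs xs f y)
  from eval_Cn.prems obtain ys' where l: "length ys' = length gs"
    and a: "\<forall>j<length gs. eval (gs ! j) xs (ys' ! j)" and b: "eval f ys' y'"
    by (cases rule: eval.cases) auto
  have "ys = ys'"
    by (rule nth_equalityI) (use eval_Cn.hyps(1) eval_Cn.IH(1) l a in auto)
  then show ?case using eval_Cn.IH(2) b by simp
next
  case (eval_Pr0 f xs y g)
  from eval_Pr0.prems show ?case using eval_Pr0.IH by (cases rule: eval.cases) auto
next
  case (eval_PrSuc f g n xs r y)
  from eval_PrSuc.prems obtain r' where "eval (Pr f g) (n # xs) r'" "eval g (n # r' # xs) y'"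
    by (cases rule: eval.cases) auto
  then show ?case using eval_PrSuc.IH by metis
next
  case (eval_Mn f y xs)
  from eval_Mn.prems obtain y2 where "y' = y2" "eval f (y2 # xs) 0"
    and h2: "\<forall>z<y2. \<exists>v. v > 0 \<and> eval f (z # xs) v"
    by (cases rule: eval.cases) auto
  show ?case
  proof (rule linorder_cases[of y y2])
    assume "y < y2" then obtain v where v: "v > 0" "eval f (y # xs) v" using h2 by blast
    have "0 = v" using eval_Mn.IH(1) v(2) by blast
    then show ?thesis using v(1) by simp
  next
    assume "y2 < y" then obtain v where "v > 0" "eval f (y2 # xs) v"
      "\<forall>w. eval f (y2 # xs) w \<longrightarrow> v = w"
      using eval_Mn.IH(2) by blast
    then show ?thesis using \<open>eval f (y2 # xs) 0\<close> by blast
  qed (use \<open>y' = y2\<close> in simp)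
qed

definition cmp :: "nat \<Rightarrow> ((nat \<Rightarrow> nat) \<Rightarrow> nat) \<Rightarrow> bool" where
  "cmp n f \<longleftrightarrow> (\<exists>r. \<forall>e. eval r (map e [0..<n]) (f e))"

fun constf :: "nat \<Rightarrow> recf" where
  "constf 0 = Z"
| "constf (Suc c) = Cn S [constf c]"

lemma eval_constf: "eval (constf c) xs c"
proof (induction c)
  case 0 then show ?case by (simp add: eval_Z)
next
  case (Suc c)
  have "eval S [c] (Suc c)" by (rule eval_S)
  then show ?case using Suc by (auto intro!: eval_Cn[where ys="[c]"])
qed

lemma cmp_const: "cmp n (\<lambda>e. c)"
  unfolding cmp_def using eval_constf by blast

lemma cmp_proj: "i < n \<Longrightarrow> cmp n (\<lambda>e. e i)"
  unfolding cmp_def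
  by (rule exI[of _ "Proj i"]) (metis eval_Proj length_map length_upt minus_nat.diff_0 nth_map_upt add_0)

lemma cmp_Suc: "cmp 1 (\<lambda>e. Suc (e 0))"
  unfolding cmp_def by (rule exI[of _ S]) (simp add: eval_S)

lemma cmp_compose:
  assumes F: "cmp k F" and G: "\<And>j. j < k \<Longrightarrow> cmp n (G j)"
  shows "cmp n (\<lambda>e. F (\<lambda>j. G j e))"
proof -
  obtain rF where rF: "\<forall>e. eval rF (map e [0..<k]) (F e)" using F cmp_def by blast
  have "\<forall>j<k. \<exists>r. \<forall>e. eval r (map e [0..<n]) (G j e)" using G cmp_def by blast
  then obtain R where R: "\<forall>j<k. \<forall>e. eval (R j) (map e [0..<n]) (G j e)" by metis
  show ?thesis unfolding cmp_def
  proof (intro exI allI)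
    fix e
    show "eval (Cn rF (map R [0..<k])) (map e [0..<n]) (F (\<lambda>j. G j e))"
      by (rule eval_Cn[where ys="map (\<lambda>j. G j e) [0..<k]"]) (use R rF in auto)
  qed
qed

fun prec :: "((nat \<Rightarrow> nat) \<Rightarrow> nat) \<Rightarrow> (nat \<Rightarrow> nat \<Rightarrow> (nat \<Rightarrow> nat) \<Rightarrow> nat) \<Rightarrow> nat \<Rightarrow> (nat \<Rightarrow> nat) \<Rightarrow> nat" where
  "prec G H 0 e = G e"
| "prec G H (Suc y) e = H y (prec G H y e) e"

lemma map_upt_shift: "map e [0..<Suc n] = e 0 # map (\<lambda>i. e (Suc i)) [0..<n]"
  by (induction n) auto

lemma cmp_prec:
  assumes G: "cmp n G" and H: "cmp (Suc (Suc n)) (\<lambda>e. H (e 0) (e 1) (\<lambda>i. e (Suc (Suc i))))"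
  shows "cmp (Suc n) (\<lambda>e. prec G H (e 0) (\<lambda>i. e (Suc i)))"
proof -
  obtain g where g: "\<forall>e. eval g (map e [0..<n]) (G e)" using G cmp_def by blast
  from H[unfolded cmp_def] obtain h where h: "\<forall>e. eval h (map e [0..<Suc (Suc n)]) (H (e 0) (e 1) (\<lambda>i. e (Suc (Suc i))))"
    by blast
  have main: "eval (Pr g h) (y # map e [0..<n]) (prec G H y e)" for y e
  proof (induction y)
    case 0 then show ?case using g by (simp add: eval_Pr0)
  next
    case (Suc y)
    let ?e = "\<lambda>i. if i = 0 then y else if i = 1 then prec G H y e else e (i - 2)"
    have "eval h (map ?e [0..<Suc (Suc n)]) (H (?e 0) (?e 1) (\<lambda>i. ?e (Suc (Suc i))))" using h by blast
    moreover have "map ?e [0..<Suc (Suc n)] = y # prec G H y e # map e [0..<n]"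
      unfolding map_upt_shift by simp
    ultimately have "eval h (y # prec G H y e # map e [0..<n]) (H y (prec G H y e) e)" by simp
    then show ?case using Suc by (simp add: eval_PrSuc)
  qed
  show ?thesis unfolding cmp_def
  proof (intro exI allI)
    fix e
    show "eval (Pr g h) (map e [0..<Suc n]) (prec G H (e 0) (\<lambda>i. e (Suc i)))"
      unfolding map_upt_shift by (rule main)
  qed
qed




lemma cmp_eq: "cmp n f \<Longrightarrow> (\<And>e. f e = g e) \<Longrightarrow> cmp n g"
proof -
  assume "cmp n f" "\<And>e. f e = g e"
  then have "f = g" by auto
  then show ?thesis using \<open>cmp n f\<close> by simp
qed

lemma cmp_app1: "cmp 1 (\<lambda>e. F (e 0)) \<Longrightarrow> cmp n g \<Longrightarrow> cmp n (\<lambda>e. F (g e))"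
  using cmp_compose[of 1 "\<lambda>e. F (e 0)" n "\<lambda>j. g"] by simp

lemma cmp_app2: "cmp 2 (\<lambda>e. F (e 0) (e 1)) \<Longrightarrow> cmp n g \<Longrightarrow> cmp n h \<Longrightarrow> cmp n (\<lambda>e. F (g e) (h e))"
  using cmp_compose[of 2 "\<lambda>e. F (e 0) (e 1)" n "\<lambda>j. if j = 0 then g else h"]
  by (simp add: less_2_cases_iff)

lemma prec_add: "prec (\<lambda>e. e 0) (\<lambda>y r e. Suc r) y e = y + e 0"
  by (induction y) auto

lemma cmp_add2: "cmp 2 (\<lambda>e. e 0 + e 1)"
proof -
  have "cmp 3 (\<lambda>e. Suc (e 1))" by (rule cmp_app1[OF cmp_Suc cmp_proj]) simp
  then have "cmp (Suc 1) (\<lambda>e. prec (\<lambda>e. e 0) (\<lambda>y r e. Suc r) (e 0) (\<lambda>i. e (Suc i)))"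
    by (intro cmp_prec cmp_proj) (simp_all add: numeral_3_eq_3 numeral_2_eq_2 One_nat_def)
  then show ?thesis by (simp add: prec_add numeral_2_eq_2)
qed

lemma cmp_add: "cmp n f \<Longrightarrow> cmp n g \<Longrightarrow> cmp n (\<lambda>e. f e + g e)"
  by (rule cmp_app2[OF cmp_add2])

lemma prec_mult: "prec (\<lambda>e. 0) (\<lambda>y r e. r + e 0) y e = y * e 0"
  by (induction y) auto

lemma cmp_mult2: "cmp 2 (\<lambda>e. e 0 * e 1)"
proof -
  have "cmp 3 (\<lambda>e. e 1 + e 2)" by (intro cmp_add cmp_proj) auto
  then have "cmp (Suc 1) (\<lambda>e. prec (\<lambda>e. 0) (\<lambda>y r e. r + e 0) (e 0) (\<lambda>i. e (Suc i)))"
    by (intro cmp_prec cmp_const) (simp_all add: numeral_3_eq_3 numeral_2_eq_2 One_nat_def)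
  then show ?thesis by (simp add: prec_mult numeral_2_eq_2)
qed

lemma cmp_mult: "cmp n f \<Longrightarrow> cmp n g \<Longrightarrow> cmp n (\<lambda>e. f e * g e)"
  by (rule cmp_app2[OF cmp_mult2])

lemma prec_pred: "prec (\<lambda>e. 0) (\<lambda>y r e. y) y e = y - 1"
  by (induction y) auto

lemma cmp_pred1: "cmp 1 (\<lambda>e. e 0 - 1)"
proof -
  have "cmp (Suc 0) (\<lambda>e. prec (\<lambda>e. 0) (\<lambda>y r e. y) (e 0) (\<lambda>i. e (Suc i)))"
    by (intro cmp_prec cmp_const cmp_proj) simp
  then show ?thesis by (simp add: prec_pred)
qed

lemma prec_sub: "prec (\<lambda>e. e 0) (\<lambda>y r e. r - 1) y e = e 0 - y"
  by (induction y) auto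

lemma cmp_sub2: "cmp 2 (\<lambda>e. e 1 - e 0)"
proof -
  have "cmp 3 (\<lambda>e. e 1 - 1)" by (rule cmp_app1[OF cmp_pred1 cmp_proj]) simp
  then have "cmp (Suc 1) (\<lambda>e. prec (\<lambda>e. e 0) (\<lambda>y r e. r - 1) (e 0) (\<lambda>i. e (Suc i)))"
    by (intro cmp_prec cmp_proj) (simp_all add: numeral_3_eq_3 numeral_2_eq_2 One_nat_def)
  then show ?thesis by (simp only: prec_sub) (simp add: numeral_2_eq_2 One_nat_def)
qed

lemma cmp_sub: "cmp n f \<Longrightarrow> cmp n g \<Longrightarrow> cmp n (\<lambda>e. f e - g e)"
proof -
  assume "cmp n f" "cmp n g"
  have "cmp 2 (\<lambda>e. e 0 - e 1)"
    using cmp_app2[OF cmp_sub2 cmp_proj[of 1 2] cmp_proj[of 0 2]] by simp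
  then show ?thesis using \<open>cmp n f\<close> \<open>cmp n g\<close> by (rule cmp_app2)
qed

lemma prec_pow: "prec (\<lambda>e. 1) (\<lambda>y r e. r * e 0) y e = e 0 ^ y"
  by (induction y) auto

lemma cmp_pow: "cmp n f \<Longrightarrow> cmp n g \<Longrightarrow> cmp n (\<lambda>e. f e ^ g e)"
proof -
  assume "cmp n f" "cmp n g"
  have "cmp 3 (\<lambda>e. e 1 * e 2)" by (intro cmp_mult cmp_proj) auto
  then have "cmp (Suc 1) (\<lambda>e. prec (\<lambda>e. 1) (\<lambda>y r e. r * e 0) (e 0) (\<lambda>i. e (Suc i)))"
    by (intro cmp_prec cmp_const) (simp_all add: numeral_3_eq_3 numeral_2_eq_2 One_nat_def)
  then have "cmp 2 (\<lambda>e. e 1 ^ e 0)" by (simp only: prec_pow) (simp add: numeral_2_eq_2 One_nat_def)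
  then have "cmp 2 (\<lambda>e. e 0 ^ e 1)"
    using cmp_app2[OF _ cmp_proj[of 1 2] cmp_proj[of 0 2]] by simp
  then show ?thesis using \<open>cmp n f\<close> \<open>cmp n g\<close> by (rule cmp_app2)
qed

definition cp :: "nat \<Rightarrow> ((nat \<Rightarrow> nat) \<Rightarrow> bool) \<Rightarrow> bool" where
  "cp n P \<longleftrightarrow> cmp n (\<lambda>e. if P e then 1 else 0)"

lemma cp_eq: "cmp n f \<Longrightarrow> cmp n g \<Longrightarrow> cp n (\<lambda>e. f e = g e)"
  unfolding cp_def
  by (rule cmp_eq[where f = "\<lambda>e. 1 - ((f e - g e) + (g e - f e))"])
    (auto intro!: cmp_sub cmp_add cmp_const)

lemma cp_less: "cmp n f \<Longrightarrow> cmp n g \<Longrightarrow> cp n (\<lambda>e. f e < g e)"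
  unfolding cp_def
  by (rule cmp_eq[where f = "\<lambda>e. 1 - (1 - (g e - f e))"])
    (auto intro!: cmp_sub cmp_const)

lemma cp_not: "cp n P \<Longrightarrow> cp n (\<lambda>e. \<not> P e)"
  unfolding cp_def
  by (rule cmp_eq[where f = "\<lambda>e. 1 - (if P e then 1 else 0)"]) (auto intro!: cmp_sub cmp_const)

lemma cp_conj: "cp n P \<Longrightarrow> cp n Q \<Longrightarrow> cp n (\<lambda>e. P e \<and> Q e)"
  unfolding cp_def
  by (rule cmp_eq[where f = "\<lambda>e. (if P e then 1 else 0) * (if Q e then 1 else 0)"]) (auto intro!: cmp_mult)

lemma cp_disj: "cp n P \<Longrightarrow> cp n Q \<Longrightarrow> cp n (\<lambda>e. P e \<or> Q e)"
proof -
  assume "cp n P" "cp n Q"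
  then have "cp n (\<lambda>e. \<not> (\<not> P e \<and> \<not> Q e))" by (intro cp_not cp_conj)
  then show ?thesis by simp
qed

lemma cp_imp: "cp n P \<Longrightarrow> cp n Q \<Longrightarrow> cp n (\<lambda>e. P e \<longrightarrow> Q e)"
proof -
  assume "cp n P" "cp n Q"
  then have "cp n (\<lambda>e. \<not> P e \<or> Q e)" by (intro cp_not cp_disj)
  then show ?thesis by simp
qed

lemma cp_iff: "cp n P \<Longrightarrow> cp n Q \<Longrightarrow> cp n (\<lambda>e. P e \<longleftrightarrow> Q e)"
proof -
  assume "cp n P" "cp n Q"
  then have "cp n (\<lambda>e. (if P e then 1 else 0::nat) = (if Q e then 1 else 0))"
    unfolding cp_def[of n P] cp_def[of n Q] by (rule cp_eq)
  then show ?thesis unfolding cp_def by (rule cmp_eq) auto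
qed

lemma cmp_if: "cp n P \<Longrightarrow> cmp n f \<Longrightarrow> cmp n g \<Longrightarrow> cmp n (\<lambda>e. if P e then f e else g e)"
  unfolding cp_def
  by (rule cmp_eq[where f = "\<lambda>e. (if P e then 1 else 0) * f e + (1 - (if P e then 1 else 0)) * g e"])
    (auto intro!: cmp_add cmp_mult cmp_sub cmp_const)

lemma cp_le: "cmp n f \<Longrightarrow> cmp n g \<Longrightarrow> cp n (\<lambda>e. f e \<le> g e)"
proof -
  assume "cmp n f" "cmp n g"
  then have "cp n (\<lambda>e. \<not> g e < f e)" by (intro cp_not cp_less)
  then show ?thesis by (simp add: not_less)
qed

lemma cp_True: "cp n (\<lambda>e. True)"
  unfolding cp_def by (simp add: cmp_const)




lemma cmp_SucI: "cmp n f \<Longrightarrow> cmp n (\<lambda>e. Suc (f e))"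
  by (rule cmp_app1[OF cmp_Suc])

definition bmu :: "nat \<Rightarrow> (nat \<Rightarrow> bool) \<Rightarrow> nat" where
  "bmu b P = (if \<exists>z<b. P z then LEAST z. P z else b)"

lemma bmu_less_iff: "bmu b P < b \<longleftrightarrow> (\<exists>z<b. P z)"
  unfolding bmu_def by (auto intro: Least_le le_less_trans)

lemma bmu_0: "bmu 0 P = 0" by (simp add: bmu_def)

lemma bmu_Suc: "bmu (Suc y) P = (if bmu y P < y then bmu y P else if P y then y else Suc y)"
proof (cases "\<exists>z<y. P z")
  case True
  then show ?thesis using bmu_less_iff[of y P] unfolding bmu_def by (auto simp: less_Suc_eq)
next
  case False
  then have "bmu y P = y" unfolding bmu_def by auto
  moreover have "P y \<Longrightarrow> (LEAST z. P z) = y"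
    by (rule Least_equality) (use False in \<open>auto simp: not_less[symmetric]\<close>)
  ultimately show ?thesis using False unfolding bmu_def by (auto simp: less_Suc_eq)
qed

lemma bmu_eq_Least: "\<exists>z<b. P z \<Longrightarrow> bmu b P = (LEAST z. P z)"
  by (simp add: bmu_def)

lemma prec_bmu: "prec (\<lambda>e. 0) (\<lambda>y r e. if r < y then r else if P y e then y else Suc y) y e = bmu y (\<lambda>z. P z e)"
  by (induction y) (simp_all add: bmu_0 bmu_Suc)

lemma cp_shift2:
  assumes "cp (Suc n) (\<lambda>e. P (e 0) (\<lambda>i. e (Suc i)))"
  shows "cp (Suc (Suc n)) (\<lambda>e. P (e 0) (\<lambda>i. e (Suc (Suc i))))"
proof -
  have "cmp (Suc (Suc n)) (\<lambda>e. (\<lambda>e. if P (e 0) (\<lambda>i. e (Suc i)) then 1 else 0)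
           (\<lambda>j. (\<lambda>j e. if j = 0 then e 0 else e (Suc j)) j e))"
    by (rule cmp_compose[OF assms[unfolded cp_def]]) (case_tac "j = 0", auto intro: cmp_proj)
  then show ?thesis unfolding cp_def by simp
qed

lemma cmp_bmu0:
  assumes "cp (Suc n) (\<lambda>e. P (e 0) (\<lambda>i. e (Suc i)))"
  shows "cmp (Suc n) (\<lambda>e. bmu (e 0) (\<lambda>z. P z (\<lambda>i. e (Suc i))))"
proof -
  have "cmp (Suc (Suc n)) (\<lambda>e. if e 1 < e 0 then e 1 else if P (e 0) (\<lambda>i. e (Suc (Suc i))) then e 0 else Suc (e 0))"
    using cp_shift2[OF assms] by (intro cmp_if cp_less cmp_proj cmp_SucI) auto
  then have "cmp (Suc n) (\<lambda>e. prec (\<lambda>e. 0) (\<lambda>y r e. if r < y then r else if P y e then y else Suc y) (e 0) (\<lambda>i. e (Suc i)))"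
    by (intro cmp_prec cmp_const) (simp add: One_nat_def)
  then show ?thesis by (simp only: prec_bmu)
qed

lemma cmp_bmu:
  assumes "cp (Suc n) (\<lambda>e. P (e 0) (\<lambda>i. e (Suc i)))" and "cmp n b"
  shows "cmp n (\<lambda>e. bmu (b e) (\<lambda>z. P z e))"
proof -
  have "cmp n (\<lambda>e. (\<lambda>e. bmu (e 0) (\<lambda>z. P z (\<lambda>i. e (Suc i))))
           (\<lambda>j. (\<lambda>j. if j = 0 then b else (\<lambda>e. e (j - 1))) j e))"
    by (rule cmp_compose[OF cmp_bmu0[OF assms(1)]]) (auto intro: cmp_proj assms(2))
  then show ?thesis by simp
qed

lemma cp_bex:
  assumes "cp (Suc n) (\<lambda>e. P (e 0) (\<lambda>i. e (Suc i)))" and "cmp n b"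
  shows "cp n (\<lambda>e. \<exists>z<b e. P z e)"
proof -
  have "cp n (\<lambda>e. bmu (b e) (\<lambda>z. P z e) < b e)"
    by (intro cp_less cmp_bmu assms)
  then show ?thesis by (simp add: bmu_less_iff)
qed

lemma cp_ball:
  assumes "cp (Suc n) (\<lambda>e. P (e 0) (\<lambda>i. e (Suc i)))" and "cmp n b"
  shows "cp n (\<lambda>e. \<forall>z<b e. P z e)"
proof -
  have "cp n (\<lambda>e. \<not> (\<exists>z<b e. \<not> P z e))"
    by (intro cp_not cp_bex assms)
  then show ?thesis by simp
qed

lemma div_bmu: "x div y = (if y = 0 then 0 else bmu (Suc x) (\<lambda>q. x < Suc q * y))"
proof (cases "y = 0")
  case False
  have "x div y < Suc x" by (simp add: le_imp_less_Suc)
  moreover have "x < Suc (x div y) * y" using False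
    by (metis div_less_iff_less_mult lessI not_gr_zero)
  ultimately have "bmu (Suc x) (\<lambda>q. x < Suc q * y) = (LEAST q. x < Suc q * y)"
    by (intro bmu_eq_Least) blast
  also have "\<dots> = x div y"
  proof (rule Least_equality)
    show "x < Suc (x div y) * y" by fact
    fix q assume "x < Suc q * y"
    then have "x div y < Suc q" using False by (simp add: div_less_iff_less_mult)
    then show "x div y \<le> q" by simp
  qed
  finally show ?thesis using False by simp
qed simp

lemma cmp_div: "cmp n f \<Longrightarrow> cmp n g \<Longrightarrow> cmp n (\<lambda>e. f e div g e)"
proof -
  assume f: "cmp n f" and g: "cmp n g"
  have "cmp 2 (\<lambda>e. if e 1 = 0 then 0 else bmu (Suc (e 0)) (\<lambda>q. e 0 < Suc q * e 1))"
    by (intro cmp_if cp_eq cmp_proj cmp_const cmp_bmu cp_less cmp_SucI cmp_mult) auto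
  then have "cmp 2 (\<lambda>e. e 0 div e 1)" by (simp only: div_bmu[symmetric])
  then show ?thesis using f g by (rule cmp_app2)
qed

lemma cmp_mod: "cmp n f \<Longrightarrow> cmp n g \<Longrightarrow> cmp n (\<lambda>e. f e mod g e)"
proof -
  assume f: "cmp n f" and g: "cmp n g"
  have "cmp n (\<lambda>e. f e - f e div g e * g e)"
    by (intro cmp_sub cmp_mult cmp_div f g)
  then show ?thesis by (simp add: minus_div_mult_eq_mod)
qed




definition blk :: "nat \<Rightarrow> nat" where "blk k = (\<Sum>j<k. 2 ^ (j * j))"

definition csize :: "nat \<Rightarrow> nat" where "csize c = bmu (Suc c) (\<lambda>k. c < blk (Suc k))"

definition cmask :: "nat \<Rightarrow> nat" where "cmask c = c - blk (csize c)"

definition cedge :: "nat \<Rightarrow> nat \<Rightarrow> nat \<Rightarrow> bool" where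
  "cedge c i j \<longleftrightarrow> i \<noteq> j \<and> i < csize c \<and> j < csize c \<and>
     i * csize c + j \<in> set_decode (cmask c) \<and> j * csize c + i \<in> set_decode (cmask c)"

definition dg :: "nat \<Rightarrow> graph" where
  "dg c = ({0..<csize c}, {(i, j). cedge c i j})"

lemma blk_Suc: "blk (Suc k) = blk k + 2 ^ (k * k)"
  by (simp add: blk_def)

lemma blk_less: "k < k' \<Longrightarrow> blk k < blk k'"
proof (induction k' arbitrary: k)
  case 0 then show ?case by simp
next
  case (Suc k')
  then show ?case unfolding blk_Suc
    by (metis add_lessD1 less_SucE nat_add_left_cancel_less trans_less_add1 zero_less_power
        zero_less_numeral add.commute less_add_same_cancel2)
qed

lemma blk_le: "k \<le> k' \<Longrightarrow> blk k \<le> blk k'"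
  by (metis blk_less le_neq_implies_less less_imp_le order_refl)

lemma blk_ge: "k \<le> blk k"
  by (induction k) (auto simp: blk_Suc Suc_le_eq intro: le_less_trans)

lemma csize_props: "blk (csize c) \<le> c \<and> c < blk (Suc (csize c))"
proof -
  have ex: "\<exists>k<Suc c. c < blk (Suc k)"
    using blk_ge[of "Suc c"] by auto
  then have cs: "csize c = (LEAST k. c < blk (Suc k))"
    unfolding csize_def by (rule bmu_eq_Least)
  have 1: "c < blk (Suc (csize c))" unfolding cs using ex by (metis LeastI)
  have 2: "blk (csize c) \<le> c"
  proof (cases "csize c")
    case (Suc k)
    then have "\<not> c < blk (Suc k)" using not_less_Least[of k "\<lambda>k. c < blk (Suc k)"] cs by simp
    then show ?thesis using Suc by simp
  qed (simp add: blk_def)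
  show ?thesis using 1 2 by simp
qed

lemma csize_unique: "blk k \<le> c \<Longrightarrow> c < blk (Suc k) \<Longrightarrow> csize c = k"
proof -
  assume a: "blk k \<le> c" "c < blk (Suc k)"
  show ?thesis
  proof (rule linorder_cases[of "csize c" k])
    assume "csize c < k"
    then have "blk (Suc (csize c)) \<le> blk k" by (intro blk_le) simp
    then show ?thesis using a csize_props[of c] by simp
  next
    assume "k < csize c"
    then have "blk (Suc k) \<le> blk (csize c)" by (intro blk_le) simp
    then show ?thesis using a csize_props[of c] by simp
  qed
qed

lemma cmask_less: "cmask c < 2 ^ (csize c * csize c)"
  using csize_props[of c] unfolding cmask_def blk_Suc by linarith

lemma code_props:
  assumes "m < 2 ^ (k * k)"
  shows "csize (blk k + m) = k" "cmask (blk k + m) = m"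
proof -
  show 1: "csize (blk k + m) = k" by (rule csize_unique) (use assms in \<open>simp_all add: blk_Suc\<close>)
  show "cmask (blk k + m) = m" unfolding cmask_def 1 by simp
qed

lemma fug_dg: "0 < csize c \<Longrightarrow> fug (dg c)"
  unfolding fug_def dg_def irrefl_def sym_def by (auto simp: cedge_def)

lemma graph_iso_refl: "graph_iso G G"
  unfolding graph_iso_def by (rule exI[of _ id]) simp

lemma graph_iso_sym:
  assumes "graph_iso G H" shows "graph_iso H G"
proof -
  obtain f where f: "bij_betw f (fst G) (fst H)"
    and e: "\<forall>a\<in>fst G. \<forall>b\<in>fst G. (a, b) \<in> snd G \<longleftrightarrow> (f a, f b) \<in> snd H"
    using assms unfolding graph_iso_def by blast
  let ?g = "inv_into (fst G) f"
  have g: "bij_betw ?g (fst H) (fst G)" by (rule bij_betw_inv_into[OF f])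
  have "\<forall>a\<in>fst H. \<forall>b\<in>fst H. (a, b) \<in> snd H \<longleftrightarrow> (?g a, ?g b) \<in> snd G"
  proof (intro ballI)
    fix a b assume ab: "a \<in> fst H" "b \<in> fst H"
    have "f (?g a) = a" "f (?g b) = b" using ab f by (auto simp: bij_betw_inv_into_right)
    moreover have "?g a \<in> fst G" "?g b \<in> fst G" using ab g by (auto simp: bij_betw_def)
    ultimately show "(a, b) \<in> snd H \<longleftrightarrow> (?g a, ?g b) \<in> snd G" using e by metis
  qed
  then show ?thesis unfolding graph_iso_def using g by blast
qed

lemma graph_iso_trans:
  assumes "graph_iso G H" "graph_iso H K" shows "graph_iso G K"
proof -
  obtain f where f: "bij_betw f (fst G) (fst H)"
    and e: "\<forall>a\<in>fst G. \<forall>b\<in>fst G. (a, b) \<in> snd G \<longleftrightarrow> (f a, f b) \<in> snd H"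
    using assms(1) unfolding graph_iso_def by blast
  obtain g where g: "bij_betw g (fst H) (fst K)"
    and e2: "\<forall>a\<in>fst H. \<forall>b\<in>fst H. (a, b) \<in> snd H \<longleftrightarrow> (g a, g b) \<in> snd K"
    using assms(2) unfolding graph_iso_def by blast
  have "bij_betw (g \<circ> f) (fst G) (fst K)" using f g by (rule bij_betw_trans)
  moreover have "\<forall>a\<in>fst G. \<forall>b\<in>fst G. (a, b) \<in> snd G \<longleftrightarrow> ((g \<circ> f) a, (g \<circ> f) b) \<in> snd K"
  proof (intro ballI)
    fix a b assume ab: "a \<in> fst G" "b \<in> fst G"
    then have "f a \<in> fst H" "f b \<in> fst H" using f by (auto simp: bij_betw_def)
    then show "(a, b) \<in> snd G \<longleftrightarrow> ((g \<circ> f) a, (g \<circ> f) b) \<in> snd K"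
      using e e2 ab by simp
  qed
  ultimately show ?thesis unfolding graph_iso_def by blast
qed

lemma graph_iso_card: "graph_iso G H \<Longrightarrow> card (fst G) = card (fst H)"
  unfolding graph_iso_def using bij_betw_same_card by blast




definition rel :: "nat \<Rightarrow> nat \<Rightarrow> nat \<Rightarrow> nat \<Rightarrow> bool" where
  "rel k p i j \<longleftrightarrow> i * k + j \<in> set_decode p"

definition isoR :: "nat \<Rightarrow> nat \<Rightarrow> nat \<Rightarrow> nat \<Rightarrow> bool" where
  "isoR k p c c' \<longleftrightarrow>
    (\<forall>i<k. \<exists>j<k. rel k p i j) \<and> (\<forall>j<k. \<exists>i<k. rel k p i j) \<and>
    (\<forall>i<k. \<forall>j<k. \<forall>j'<k. rel k p i j \<and> rel k p i j' \<longrightarrow> j = j') \<and>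
    (\<forall>i<k. \<forall>i'<k. \<forall>j<k. rel k p i j \<and> rel k p i' j \<longrightarrow> i = i') \<and>
    (\<forall>i<k. \<forall>j<k. \<forall>i'<k. \<forall>j'<k. rel k p i i' \<and> rel k p j j' \<longrightarrow> (cedge c i j \<longleftrightarrow> cedge c' i' j'))"

definition iso_code :: "nat \<Rightarrow> nat \<Rightarrow> bool" where
  "iso_code c c' \<longleftrightarrow> csize c = csize c' \<and> (\<exists>p < 2 ^ (csize c * csize c). isoR (csize c) p c c')"

lemma pair_idx:
  assumes "i < k" "j < k" "i' < k" "j' < k" "i * k + j = i' * k + (j'::nat)"
  shows "i = i' \<and> j = j'"
proof -
  have "(i * k + j) div k = i" "(i * k + j) mod k = j" using assms(1-4) by auto
  moreover have "(i' * k + j') div k = i'" "(i' * k + j') mod k = j'" using assms(1-4) by auto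
  ultimately show ?thesis using assms(5) by metis
qed

lemma pair_idx_less: "i < k \<Longrightarrow> j < k \<Longrightarrow> i * k + j < k * (k::nat)"
proof -
  assume "i < k" "j < k"
  then have "i * k + j < i * k + k" by simp
  also have "\<dots> = Suc i * k" by simp
  also have "\<dots> \<le> k * k" using \<open>i < k\<close> by (intro mult_le_mono1) simp
  finally show ?thesis .
qed

lemma set_encode_less: "finite SS \<Longrightarrow> SS \<subseteq> {..<t} \<Longrightarrow> set_encode SS < 2 ^ t"
proof (induction t arbitrary: SS)
  case 0 then show ?case by simp
next
  case (Suc t)
  show ?case
  proof (cases "t \<in> SS")
    case True
    have "SS = insert t (SS - {t})" using True by auto
    then have "set_encode SS = 2 ^ t + set_encode (SS - {t})"
      using Suc.prems by (metis finite_Diff set_encode_insert Diff_iff singletonI)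
    moreover have "set_encode (SS - {t}) < 2 ^ t"
      using Suc.prems by (intro Suc.IH) (auto simp: less_Suc_eq)
    ultimately show ?thesis by simp
  next
    case False
    then have "set_encode SS < 2 ^ t" using Suc.prems by (intro Suc.IH) (auto simp: less_Suc_eq)
    then show ?thesis by simp
  qed
qed

lemma iso_code_imp: "iso_code c c' \<Longrightarrow> graph_iso (dg c) (dg c')"
proof -
  assume "iso_code c c'"
  then obtain p where ks: "csize c = csize c'" and R: "isoR (csize c) p c c'"
    unfolding iso_code_def by blast
  define k where "k = csize c"
  have R': "isoR k p c c'" using R k_def by simp
  have R1: "\<forall>i<k. \<exists>j<k. rel k p i j" using R' unfolding isoR_def by (elim conjE)
  have R2: "\<forall>j<k. \<exists>i<k. rel k p i j" using R' unfolding isoR_def by (elim conjE)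
  have R3: "\<forall>i<k. \<forall>j<k. \<forall>j'<k. rel k p i j \<and> rel k p i j' \<longrightarrow> j = j'"
    using R' unfolding isoR_def by (elim conjE)
  have R4: "\<forall>i<k. \<forall>i'<k. \<forall>j<k. rel k p i j \<and> rel k p i' j \<longrightarrow> i = i'"
    using R' unfolding isoR_def by (elim conjE)
  have R5: "\<forall>i<k. \<forall>j<k. \<forall>i'<k. \<forall>j'<k. rel k p i i' \<and> rel k p j j' \<longrightarrow> (cedge c i j \<longleftrightarrow> cedge c' i' j')"
    using R' unfolding isoR_def by (elim conjE)
  define f where "f i = (THE j. j < k \<and> rel k p i j)" for i
  have fi: "f i < k \<and> rel k p i (f i)" if i: "i < k" for i
  proof -
    obtain j where j: "j < k" "rel k p i j" using R1 i by blast
    have "f i = j" unfolding f_def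
    proof (rule the_equality)
      show "j < k \<and> rel k p i j" using j by simp
      fix j' assume "j' < k \<and> rel k p i j'"
      then show "j' = j" using R3 j i by blast
    qed
    then show ?thesis using j by simp
  qed
  have fu: "f i = j" if a: "i < k" "j < k" "rel k p i j" for i j
    using fi[OF a(1)] R3 a by blast
  have bij: "bij_betw f {0..<k} {0..<k}"
    unfolding bij_betw_def
  proof
    show "inj_on f {0..<k}"
    proof (rule inj_onI)
      fix i i' assume "i \<in> {0..<k}" "i' \<in> {0..<k}" "f i = f i'"
      then have ii: "i < k" "i' < k" by auto
      have "rel k p i (f i)" "rel k p i' (f i)" "f i < k"
        using fi[OF ii(1)] fi[OF ii(2)] \<open>f i = f i'\<close> by auto
      then show "i = i'" using R4 ii by blast
    qed
    show "f ` {0..<k} = {0..<k}"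
    proof
      show "f ` {0..<k} \<subseteq> {0..<k}" using fi by auto
      show "{0..<k} \<subseteq> f ` {0..<k}"
      proof
        fix j assume j: "j \<in> {0..<k}"
        then obtain i where "i < k" "rel k p i j" using R2 by auto
        then have "f i = j" "i \<in> {0..<k}" using fu j by auto
        then show "j \<in> f ` {0..<k}" by blast
      qed
    qed
  qed
  have "\<forall>a\<in>{0..<k}. \<forall>b\<in>{0..<k}. cedge c a b \<longleftrightarrow> cedge c' (f a) (f b)"
  proof (intro ballI)
    fix a b assume "a \<in> {0..<k}" "b \<in> {0..<k}"
    then have ab: "a < k" "b < k" by auto
    show "cedge c a b \<longleftrightarrow> cedge c' (f a) (f b)" using R5 fi[OF ab(1)] fi[OF ab(2)] ab by blast
  qed
  moreover have "fst (dg c) = {0..<k}" "fst (dg c') = {0..<k}" using ks k_def by (auto simp: dg_def)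
  moreover have "snd (dg c) = {(i, j). cedge c i j}" "snd (dg c') = {(i, j). cedge c' i j}"
    by (auto simp: dg_def)
  ultimately show ?thesis unfolding graph_iso_def using bij by auto
qed

lemma imp_iso_code: "graph_iso (dg c) (dg c') \<Longrightarrow> iso_code c c'"
proof -
  assume gi: "graph_iso (dg c) (dg c')"
  have ks: "csize c = csize c'" using graph_iso_card[OF gi] by (simp add: dg_def)
  define k where "k = csize c"
  obtain f where f: "bij_betw f {0..<k} {0..<k}"
    and e: "\<forall>a\<in>{0..<k}. \<forall>b\<in>{0..<k}. cedge c a b \<longleftrightarrow> cedge c' (f a) (f b)"
    using gi ks unfolding graph_iso_def dg_def k_def by auto
  have fk: "i < k \<Longrightarrow> f i < k" for i using f by (auto simp: bij_betw_def)
  define SS where "SS = (\<lambda>i. i * k + f i) ` {0..<k}"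
  define p where "p = set_encode SS"
  have finS: "finite SS" unfolding SS_def by simp
  have Ssub: "SS \<subseteq> {..<k * k}" unfolding SS_def using fk pair_idx_less by auto
  have relf: "rel k p i j \<longleftrightarrow> j = f i" if "i < k" "j < k" for i j
  proof -
    have "rel k p i j \<longleftrightarrow> i * k + j \<in> SS" unfolding rel_def p_def using finS by simp
    also have "\<dots> \<longleftrightarrow> j = f i"
    proof
      assume "i * k + j \<in> SS"
      then obtain i' where i': "i' < k" "i * k + j = i' * k + f i'" unfolding SS_def by auto
      then show "j = f i" using pair_idx[OF that i'(1) fk[OF i'(1)] i'(2)] by simp
    next
      assume "j = f i"
      then show "i * k + j \<in> SS" unfolding SS_def using that by auto
    qed
    finally show ?thesis .
  qed
  have pl: "p < 2 ^ (k * k)" unfolding p_def by (rule set_encode_less[OF finS Ssub])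
  have surj: "\<exists>i<k. f i = j" if "j < k" for j
    using f that unfolding bij_betw_def by (metis atLeastLessThan_iff imageE zero_le)
  have inj: "f i = f i' \<Longrightarrow> i < k \<Longrightarrow> i' < k \<Longrightarrow> i = i'" for i i'
    using f unfolding bij_betw_def inj_on_def by auto
  have c1: "\<forall>i<k. \<exists>j<k. rel k p i j" using relf fk by blast
  have c2: "\<forall>j<k. \<exists>i<k. rel k p i j" using relf surj by metis
  have c3: "\<forall>i<k. \<forall>j<k. \<forall>j'<k. rel k p i j \<and> rel k p i j' \<longrightarrow> j = j'" using relf by simp
  have c4: "\<forall>i<k. \<forall>i'<k. \<forall>j<k. rel k p i j \<and> rel k p i' j \<longrightarrow> i = i'" using relf inj by metis
  have c5: "\<forall>i<k. \<forall>j<k. \<forall>i'<k. \<forall>j'<k. rel k p i i' \<and> rel k p j j' \<longrightarrow> (cedge c i j \<longleftrightarrow> cedge c' i' j')"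
  proof (intro allI impI)
    fix i j i' j' assume a: "i < k" "j < k" "i' < k" "j' < k" "rel k p i i' \<and> rel k p j j'"
    then have "i' = f i" "j' = f j" using relf by auto
    then show "cedge c i j \<longleftrightarrow> cedge c' i' j'" using e a by auto
  qed
  have "isoR k p c c'"
    unfolding isoR_def using c1 c2 c3 c4 c5 by blast
  then show ?thesis unfolding iso_code_def using ks pl k_def by auto
qed

lemma iso_code_iff: "iso_code c c' \<longleftrightarrow> graph_iso (dg c) (dg c')"
  using iso_code_imp imp_iso_code by blast




definition valid :: "nat \<Rightarrow> bool" where
  "valid c \<longleftrightarrow> 0 < csize c \<and> (\<forall>c'<c. \<not> iso_code c' c)"

definition nxt :: "nat \<Rightarrow> nat" where
  "nxt c = bmu (Suc (blk (Suc (csize c)))) (\<lambda>c'. c < c' \<and> valid c')"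

fun cs :: "nat \<Rightarrow> nat" where
  "cs 0 = blk 1"
| "cs (Suc n) = nxt (cs n)"

lemma csize_blk: "csize (blk k) = k"
  using code_props(1)[of 0 k] by simp

lemma csize_le: "c < blk k \<Longrightarrow> csize c < k"
  using csize_props[of c] blk_le[of k "csize c"] by (metis leD le_less_linear order_trans)

lemma valid_blk: "valid (blk (Suc k))"
  unfolding valid_def
proof
  show "0 < csize (blk (Suc k))" by (simp add: csize_blk)
  show "\<forall>c'<blk (Suc k). \<not> iso_code c' (blk (Suc k))"
  proof (intro allI impI)
    fix c' assume "c' < blk (Suc k)"
    then have "csize c' < Suc k" by (rule csize_le)
    then show "\<not> iso_code c' (blk (Suc k))" unfolding iso_code_def by (simp add: csize_blk)
  qed
qed

lemma nxt_props: "c < nxt c \<and> valid (nxt c)" "c < v \<Longrightarrow> valid v \<Longrightarrow> nxt c \<le> v"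
proof -
  let ?w = "blk (Suc (csize c))"
  have w: "c < ?w" "valid ?w" using csize_props[of c] valid_blk by auto
  then have ex: "\<exists>z<Suc ?w. c < z \<and> valid z" by auto
  have eq: "nxt c = (LEAST z. c < z \<and> valid z)" unfolding nxt_def by (rule bmu_eq_Least[OF ex])
  show "c < nxt c \<and> valid (nxt c)" unfolding eq by (rule LeastI[of _ ?w]) (use w in simp)
  show "c < v \<Longrightarrow> valid v \<Longrightarrow> nxt c \<le> v" unfolding eq by (rule Least_le) simp
qed

lemma cs_valid: "valid (cs n)"
  by (cases n) (simp_all add: nxt_props valid_blk[of 0, simplified])

lemma cs_mono: "strict_mono cs"
  unfolding strict_mono_Suc_iff by (simp add: nxt_props)

lemma cs0_le: "valid v \<Longrightarrow> cs 0 \<le> v"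
proof -
  assume "valid v"
  then have "1 \<le> csize v" by (simp add: valid_def)
  then have "blk 1 \<le> blk (csize v)" by (rule blk_le)
  then show ?thesis using csize_props[of v] by simp
qed

lemma valid_cs_aux: "valid v \<Longrightarrow> v < cs N \<Longrightarrow> \<exists>n. cs n = v"
proof (induction N)
  case 0 then show ?case using cs0_le by fastforce
next
  case (Suc N)
  show ?case
  proof (cases "v < cs N")
    case True then show ?thesis using Suc by blast
  next
    case False
    show ?thesis
    proof (cases "cs N < v")
      case True
      then have "nxt (cs N) \<le> v" using nxt_props(2) Suc.prems(1) by blast
      then show ?thesis using Suc.prems(2) by simp
    next
      case False
      then show ?thesis using \<open>\<not> v < cs N\<close> by (intro exI[of _ N]) simp
    qed
  qed
qed

lemma valid_cs: "valid v \<Longrightarrow> \<exists>n. cs n = v"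
proof -
  assume "valid v"
  have "v \<le> cs v" using cs_mono by (rule strict_mono_imp_increasing)
  also have "cs v < cs (Suc v)" using cs_mono by (simp add: strict_mono_Suc_iff)
  finally show ?thesis using valid_cs_aux[OF \<open>valid v\<close>] by blast
qed

lemma iso_code_refl: "iso_code c c"
  by (simp add: iso_code_iff graph_iso_refl)

lemma iso_code_trans: "iso_code a b \<Longrightarrow> iso_code b c \<Longrightarrow> iso_code a c"
  by (simp add: iso_code_iff) (rule graph_iso_trans)

lemma iso_code_sym: "iso_code a b \<Longrightarrow> iso_code b a"
  by (simp add: iso_code_iff) (rule graph_iso_sym)

lemma least_iso_valid:
  assumes "0 < csize c"
  shows "valid (LEAST v. iso_code v c)" "iso_code (LEAST v. iso_code v c) c"
proof -
  let ?v = "LEAST v. iso_code v c"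
  show iv: "iso_code ?v c" by (rule LeastI[of _ c]) (rule iso_code_refl)
  have "csize ?v = csize c" using iv by (simp add: iso_code_def)
  moreover have "\<not> iso_code c' ?v" if "c' < ?v" for c'
  proof
    assume "iso_code c' ?v"
    then have "iso_code c' c" using iv by (rule iso_code_trans)
    then show False using not_less_Least[OF that] by blast
  qed
  ultimately show "valid ?v" using assms unfolding valid_def by auto
qed

definition Gseq :: "nat \<Rightarrow> graph" where "Gseq n = dg (cs n)"

lemma fug_Gs: "fug (Gseq n)"
  unfolding Gseq_def by (rule fug_dg) (use cs_valid in \<open>simp add: valid_def\<close>)

lemma fug_code:
  assumes "fug G"
  shows "\<exists>c. 0 < csize c \<and> graph_iso G (dg c)"
proof -
  obtain V E where G: "G = (V, E)" by (cases G)
  have fin: "finite V" and ne: "V \<noteq> {}" and sub: "E \<subseteq> V \<times> V" and irr: "irrefl E" and sy: "sym E"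
    using assms G by (auto simp: fug_def)
  define k where "k = card V"
  have k0: "0 < k" using fin ne k_def by (simp add: card_gt_0_iff)
  obtain h where h: "bij_betw h {0..<k} V" using ex_bij_betw_nat_finite[OF fin] k_def by blast
  have hV: "i < k \<Longrightarrow> h i \<in> V" for i using h by (auto simp: bij_betw_def)
  define P where "P = {(i, j). i < k \<and> j < k \<and> (h i, h j) \<in> E}"
  define SS where "SS = (\<lambda>(i, j). i * k + j) ` P"
  have finP: "finite P" unfolding P_def
    by (rule finite_subset[of _ "{..<k} \<times> {..<k}"]) auto
  have finS: "finite SS" unfolding SS_def using finP by simp
  have Ssub: "SS \<subseteq> {..<k * k}" unfolding SS_def P_def using pair_idx_less by auto
  define m where "m = set_encode SS"
  have ml: "m < 2 ^ (k * k)" unfolding m_def by (rule set_encode_less[OF finS Ssub])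
  define c where "c = blk k + m"
  have ck: "csize c = k" and cm: "cmask c = m" using code_props[OF ml] c_def by auto
  have memS: "i * k + j \<in> set_decode (cmask c) \<longleftrightarrow> (h i, h j) \<in> E" if ij: "i < k" "j < k" for i j
  proof -
    have "i * k + j \<in> set_decode (cmask c) \<longleftrightarrow> i * k + j \<in> SS" using cm m_def finS by simp
    also have "\<dots> \<longleftrightarrow> (h i, h j) \<in> E"
    proof
      assume "i * k + j \<in> SS"
      then obtain i' j' where "i' < k" "j' < k" "(h i', h j') \<in> E" "i * k + j = i' * k + j'"
        unfolding SS_def P_def by auto
      then show "(h i, h j) \<in> E" using pair_idx[OF ij] by metis
    next
      assume "(h i, h j) \<in> E"
      then show "i * k + j \<in> SS" unfolding SS_def P_def using ij by force
    qed
    finally show ?thesis .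
  qed
  have edge: "cedge c a b \<longleftrightarrow> (h a, h b) \<in> E" if ab: "a < k" "b < k" for a b
  proof
    assume "cedge c a b" then show "(h a, h b) \<in> E" using memS ab ck by (simp add: cedge_def)
  next
    assume e: "(h a, h b) \<in> E"
    then have "a \<noteq> b" using irr by (auto simp: irrefl_def)
    moreover have "(h b, h a) \<in> E" using e sy by (auto simp: sym_def)
    ultimately show "cedge c a b" using memS ab ck e by (simp add: cedge_def)
  qed
  have "graph_iso (dg c) G"
    unfolding graph_iso_def
  proof (intro exI conjI)
    show "bij_betw h (fst (dg c)) (fst G)" using h G ck by (simp add: dg_def)
    show "\<forall>a\<in>fst (dg c). \<forall>b\<in>fst (dg c). (a, b) \<in> snd (dg c) \<longleftrightarrow> (h a, h b) \<in> snd G"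
      using edge G ck by (simp add: dg_def)
  qed
  then show ?thesis using ck k0 graph_iso_sym by blast
qed

lemma exists_Gs: "fug G \<Longrightarrow> \<exists>n. graph_iso G (Gseq n)"
proof -
  assume "fug G"
  then obtain c where c: "0 < csize c" "graph_iso G (dg c)" using fug_code by blast
  let ?v = "LEAST v. iso_code v c"
  obtain n where n: "cs n = ?v" using valid_cs least_iso_valid(1)[OF c(1)] by blast
  have "graph_iso (dg ?v) (dg c)" using least_iso_valid(2)[OF c(1)] by (simp add: iso_code_iff)
  then have "graph_iso G (dg ?v)" using c(2) graph_iso_sym graph_iso_trans by blast
  then show ?thesis using n unfolding Gseq_def by metis
qed

lemma unique_Gs: "graph_iso G (Gseq n) \<Longrightarrow> graph_iso G (Gseq m) \<Longrightarrow> n = m"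
proof -
  assume a: "graph_iso G (Gseq n)" "graph_iso G (Gseq m)"
  then have i: "iso_code (cs n) (cs m)" unfolding Gseq_def iso_code_iff
    using graph_iso_sym graph_iso_trans by blast
  have "cs n = cs m"
  proof (rule linorder_cases[of "cs n" "cs m"])
    assume "cs n < cs m" then show ?thesis using cs_valid[of m] i by (auto simp: valid_def)
  next
    assume "cs m < cs n" then show ?thesis using cs_valid[of n] iso_code_sym[OF i] by (auto simp: valid_def)
  qed
  then show "n = m" using cs_mono strict_mono_eq by metis
qed

lemma order_Gs:
  assumes "fug G" "fug G'" "proper_substructure G G'" "graph_iso G (Gseq m)" "graph_iso G' (Gseq n)"
  shows "m < n"
proof -
  have sub: "fst G \<subseteq> fst G'" and eq: "snd G = snd G' \<inter> (fst G \<times> fst G)" and ne: "G \<noteq> G'"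
    using assms(3) by (auto simp: proper_substructure_def substructure_def)
  have "fst G \<noteq> fst G'"
  proof
    assume f: "fst G = fst G'"
    have "snd G' \<subseteq> fst G' \<times> fst G'" using assms(2) by (simp add: fug_def)
    then have "snd G = snd G'" using eq f by auto
    then show False using f ne by (simp add: prod_eq_iff)
  qed
  then have "fst G \<subset> fst G'" using sub by auto
  then have "card (fst G) < card (fst G')" using assms(2) by (intro psubset_card_mono) (auto simp: fug_def)
  then have "csize (cs m) < csize (cs n)"
    using graph_iso_card[OF assms(4)] graph_iso_card[OF assms(5)] by (simp add: Gseq_def dg_def)
  then have "cs m < cs n"
    using csize_props[of "cs m"] csize_props[of "cs n"] blk_le[of "Suc (csize (cs m))" "csize (cs n)"]
    by linarith
  then show ?thesis using cs_mono by (simp add: strict_mono_less)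
qed




lemma cmp_app3: "cmp 3 (\<lambda>e. F (e 0) (e 1) (e 2)) \<Longrightarrow> cmp n f \<Longrightarrow> cmp n g \<Longrightarrow> cmp n h
   \<Longrightarrow> cmp n (\<lambda>e. F (f e) (g e) (h e))"
  using cmp_compose[of 3 "\<lambda>e. F (e 0) (e 1) (e 2)" n "\<lambda>j. if j = 0 then f else if j = 1 then g else h"]
  by (auto simp: numeral_3_eq_3 less_Suc_eq)

lemma cp_app1: "cp 1 (\<lambda>e. P (e 0)) \<Longrightarrow> cmp n f \<Longrightarrow> cp n (\<lambda>e. P (f e))"
  unfolding cp_def by (rule cmp_app1[where F = "\<lambda>x. if P x then 1 else 0"])

lemma cp_app2: "cp 2 (\<lambda>e. P (e 0) (e 1)) \<Longrightarrow> cmp n f \<Longrightarrow> cmp n g \<Longrightarrow> cp n (\<lambda>e. P (f e) (g e))"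
  unfolding cp_def by (rule cmp_app2[where F = "\<lambda>x y. if P x y then 1 else 0"])

lemma cp_app3: "cp 3 (\<lambda>e. P (e 0) (e 1) (e 2)) \<Longrightarrow> cmp n f \<Longrightarrow> cmp n g \<Longrightarrow> cmp n h
   \<Longrightarrow> cp n (\<lambda>e. P (f e) (g e) (h e))"
  unfolding cp_def by (rule cmp_app3[where F = "\<lambda>x y z. if P x y z then 1 else 0"])

lemmas cr = cmp_const cmp_proj cmp_SucI cmp_add cmp_mult cmp_sub cmp_pow cmp_div cmp_mod cmp_if
  cp_eq cp_less cp_le cp_not cp_conj cp_disj cp_imp cp_iff cp_bex cp_ball cmp_bmu cp_True

lemma prec_blk: "prec (\<lambda>e. 0) (\<lambda>y r e. r + 2 ^ (y * y)) y e = blk y"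
  by (induction y) (simp_all add: blk_Suc blk_def)

lemma cmp_blk: "cmp n f \<Longrightarrow> cmp n (\<lambda>e. blk (f e))"
proof -
  have "cmp (Suc 0) (\<lambda>e. prec (\<lambda>e. 0) (\<lambda>y r e. r + 2 ^ (y * y)) (e 0) (\<lambda>i. e (Suc i)))"
    by (intro cmp_prec cr) auto
  then have "cmp 1 (\<lambda>e. blk (e 0))" by (simp add: prec_blk)
  then show "cmp n f \<Longrightarrow> cmp n (\<lambda>e. blk (f e))" by (rule cmp_app1)
qed

lemma cmp_csize: "cmp n f \<Longrightarrow> cmp n (\<lambda>e. csize (f e))"
proof -
  have "cmp 1 (\<lambda>e. bmu (Suc (e 0)) (\<lambda>k. e 0 < blk (Suc k)))"
    by (intro cr cmp_blk) auto
  then have "cmp 1 (\<lambda>e. csize (e 0))" by (simp add: csize_def)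
  then show "cmp n f \<Longrightarrow> cmp n (\<lambda>e. csize (f e))" by (rule cmp_app1)
qed

lemma cmp_cmask: "cmp n f \<Longrightarrow> cmp n (\<lambda>e. cmask (f e))"
  unfolding cmask_def by (intro cr cmp_blk cmp_csize)

lemma cp_mem: "cmp n f \<Longrightarrow> cmp n g \<Longrightarrow> cp n (\<lambda>e. f e \<in> set_decode (g e))"
proof -
  assume "cmp n f" "cmp n g"
  then have "cp n (\<lambda>e. g e div 2 ^ f e mod 2 = 1)" by (intro cr)
  then show ?thesis unfolding set_decode_def by (simp add: odd_iff_mod_2_eq_one)
qed

lemma cp_cedge: "cmp n f \<Longrightarrow> cmp n g \<Longrightarrow> cmp n h \<Longrightarrow> cp n (\<lambda>e. cedge (f e) (g e) (h e))"
proof -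
  have "cp 3 (\<lambda>e. cedge (e 0) (e 1) (e 2))"
    unfolding cedge_def by (intro cr cp_mem cmp_csize cmp_cmask) auto
  then show "cmp n f \<Longrightarrow> cmp n g \<Longrightarrow> cmp n h \<Longrightarrow> cp n (\<lambda>e. cedge (f e) (g e) (h e))"
    by (rule cp_app3)
qed

lemma cp_iso_code: "cmp n f \<Longrightarrow> cmp n g \<Longrightarrow> cp n (\<lambda>e. iso_code (f e) (g e))"
proof -
  have "cp 2 (\<lambda>e. iso_code (e 0) (e 1))"
    unfolding iso_code_def isoR_def rel_def
    by (intro cr cp_mem cmp_csize cp_cedge) auto
  then show "cmp n f \<Longrightarrow> cmp n g \<Longrightarrow> cp n (\<lambda>e. iso_code (f e) (g e))"
    by (rule cp_app2)
qed




lemma cp_valid: "cmp n f \<Longrightarrow> cp n (\<lambda>e. valid (f e))"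
proof -
  have "cp 1 (\<lambda>e. valid (e 0))"
    unfolding valid_def by (intro cr cmp_csize cp_iso_code) auto
  then show "cmp n f \<Longrightarrow> cp n (\<lambda>e. valid (f e))" by (rule cp_app1)
qed

lemma cmp_nxt: "cmp 1 (\<lambda>e. nxt (e 0))"
  unfolding nxt_def by (intro cr cmp_blk cmp_csize cp_valid) auto

lemma prec_cs: "prec (\<lambda>e. blk 1) (\<lambda>y r e. nxt r) y e = cs y"
  by (induction y) auto

lemma cmp_cs: "cmp n f \<Longrightarrow> cmp n (\<lambda>e. cs (f e))"
proof -
  have h: "cmp (Suc 0) (\<lambda>e. prec (\<lambda>e. blk 1) (\<lambda>y r e. nxt r) (e 0) (\<lambda>i. e (Suc i)))"
    by (intro cmp_prec cr cmp_app1[OF cmp_nxt]) auto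
  from h[unfolded prec_cs] have "cmp 1 (\<lambda>e. cs (e 0))" by simp
  then show "cmp n f \<Longrightarrow> cmp n (\<lambda>e. cs (f e))" by (rule cmp_app1)
qed

lemma prec_tri: "prec (\<lambda>e. 0) (\<lambda>y r e. r + Suc y) y e = triangle y"
  by (induction y) auto

lemma cmp_tri: "cmp n f \<Longrightarrow> cmp n (\<lambda>e. triangle (f e))"
proof -
  have h: "cmp (Suc 0) (\<lambda>e. prec (\<lambda>e. 0) (\<lambda>y r e. r + Suc y) (e 0) (\<lambda>i. e (Suc i)))"
    by (intro cmp_prec cr) auto
  from h[unfolded prec_tri] have "cmp 1 (\<lambda>e. triangle (e 0))" by simp
  then show "cmp n f \<Longrightarrow> cmp n (\<lambda>e. triangle (f e))" by (rule cmp_app1)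
qed

lemma Least_eq_self: "(LEAST a'::nat. a' = a) = a"
  by (rule Least_equality) auto

lemma pe_def: "prod_encode (a, b) = triangle (a + b) + a"
  by (simp add: prod_encode_def)

lemma pfst_bmu: "fst (prod_decode x) = bmu (Suc x) (\<lambda>a. \<exists>b<Suc x. triangle (a + b) + a = x)"
proof -
  obtain a b where ab: "prod_decode x = (a, b)" by (cases "prod_decode x")
  then have x: "prod_encode (a, b) = x" by (metis prod_decode_inverse)
  have ax: "a \<le> x" "b \<le> x" using x le_prod_encode_1 le_prod_encode_2 by metis+
  have P: "(\<exists>b'<Suc x. triangle (a' + b') + a' = x) \<longleftrightarrow> a' = a" for a'
  proof
    assume "\<exists>b'<Suc x. triangle (a' + b') + a' = x"
    then obtain b' where "prod_encode (a', b') = x" by (auto simp: pe_def)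
    then show "a' = a" using x by (metis Pair_inject prod_encode_eq)
  next
    assume "a' = a" then show "\<exists>b'<Suc x. triangle (a' + b') + a' = x"
      using x ax by (intro exI[of _ b]) (auto simp: pe_def)
  qed
  have "bmu (Suc x) (\<lambda>a. \<exists>b<Suc x. triangle (a + b) + a = x) = (LEAST a'. a' = a)"
    unfolding P using ax by (intro bmu_eq_Least) auto
  then show ?thesis using ab by (simp add: Least_eq_self)
qed

lemma psnd_bmu: "snd (prod_decode x) = bmu (Suc x) (\<lambda>b. \<exists>a<Suc x. triangle (a + b) + a = x)"
proof -
  obtain a b where ab: "prod_decode x = (a, b)" by (cases "prod_decode x")
  then have x: "prod_encode (a, b) = x" by (metis prod_decode_inverse)
  have ax: "a \<le> x" "b \<le> x" using x le_prod_encode_1 le_prod_encode_2 by metis+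
  have P: "(\<exists>a'<Suc x. triangle (a' + b') + a' = x) \<longleftrightarrow> b' = b" for b'
  proof
    assume "\<exists>a'<Suc x. triangle (a' + b') + a' = x"
    then obtain a' where "prod_encode (a', b') = x" by (auto simp: pe_def)
    then show "b' = b" using x by (metis Pair_inject prod_encode_eq)
  next
    assume "b' = b" then show "\<exists>a'<Suc x. triangle (a' + b') + a' = x"
      using x ax by (intro exI[of _ a]) (auto simp: pe_def)
  qed
  have "bmu (Suc x) (\<lambda>b. \<exists>a<Suc x. triangle (a + b) + a = x) = (LEAST b'. b' = b)"
    unfolding P using ax by (intro bmu_eq_Least) auto
  then show ?thesis using ab by (simp add: Least_eq_self)
qed

lemma cmp_pfst: "cmp n f \<Longrightarrow> cmp n (\<lambda>e. fst (prod_decode (f e)))"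
proof -
  have "cmp 1 (\<lambda>e. bmu (Suc (e 0)) (\<lambda>a. \<exists>b<Suc (e 0). triangle (a + b) + a = e 0))"
    by (intro cr cmp_tri) auto
  then have "cmp 1 (\<lambda>e. fst (prod_decode (e 0)))" by (simp only: pfst_bmu)
  then show "cmp n f \<Longrightarrow> cmp n (\<lambda>e. fst (prod_decode (f e)))" by (rule cmp_app1)
qed

lemma cmp_psnd: "cmp n f \<Longrightarrow> cmp n (\<lambda>e. snd (prod_decode (f e)))"
proof -
  have "cmp 1 (\<lambda>e. bmu (Suc (e 0)) (\<lambda>b. \<exists>a<Suc (e 0). triangle (a + b) + a = e 0))"
    by (intro cr cmp_tri) auto
  then have "cmp 1 (\<lambda>e. snd (prod_decode (e 0)))" by (simp only: psnd_bmu)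
  then show "cmp n f \<Longrightarrow> cmp n (\<lambda>e. snd (prod_decode (f e)))" by (rule cmp_app1)
qed

definition lit_of :: "nat \<Rightarrow> literal" where
  "lit_of l = (let p = l div 2 div 2;
      at = (if l div 2 mod 2 = 0 then AEq (fst (prod_decode p)) (snd (prod_decode p))
            else AE (fst (prod_decode p)) (snd (prod_decode p)))
    in if l mod 2 = 0 then Pos at else Neg at)"

lemma ar1: "Suc (4 * k) mod 2 = Suc 0" "Suc (4 * k) div 2 = 2 * k" "(4 * k) div 2 = 2 * k"
  "(4 * k) mod 2 = (0::nat)" "Suc (2 * k) div 2 = k" "Suc (2 * k) mod 2 = Suc 0"
  "Suc (Suc (4 * k)) mod 2 = 0" "Suc (Suc (4 * k)) div 2 = Suc (2 * k)"
  "Suc (Suc (Suc (4 * k))) mod 2 = Suc 0" "Suc (Suc (Suc (4 * k))) div 2 = Suc (2 * k)"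
  "(2 * k) div 2 = (k::nat)" "(2 * k) mod 2 = (0::nat)"
  by presburger+

lemma lit_of_code: "lit_of (lit_code \<phi>) = \<phi>"
proof (cases \<phi>)
  case (Pos a) then show ?thesis by (cases a) (simp_all add: lit_of_def Let_def ar1)
next
  case (Neg a) then show ?thesis by (cases a) (simp_all add: lit_of_def Let_def ar1)
qed

lemma code_lit_of: "lit_code (lit_of l) = l"
proof -
  define p where "p = l div 2 div 2"
  have pe: "prod_encode (prod_decode p) = p" by simp
  have a: "l div 2 = 2 * p + l div 2 mod 2" unfolding p_def by simp
  have l: "l = 2 * (l div 2) + l mod 2" by simp
  show ?thesis
  proof (cases "l div 2 mod 2 = 0")
    case True
    then have "atom_code (AEq (fst (prod_decode p)) (snd (prod_decode p))) = l div 2"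
      using a by simp
    then show ?thesis unfolding lit_of_def Let_def p_def[symmetric] using True
      by (cases "l mod 2 = 0") (simp_all, presburger+)
  next
    case False
    then have "l div 2 mod 2 = 1" by simp
    then have "atom_code (AE (fst (prod_decode p)) (snd (prod_decode p))) = l div 2"
      using a by simp
    then show ?thesis unfolding lit_of_def Let_def p_def[symmetric] using False
      by (cases "l mod 2 = 0") (simp_all, presburger+)
  qed
qed




lemma cp_if: "cp n A \<Longrightarrow> cp n B \<Longrightarrow> cp n C \<Longrightarrow> cp n (\<lambda>e. if A e then B e else C e)"
proof -
  assume "cp n A" "cp n B" "cp n C"
  then have "cp n (\<lambda>e. (A e \<and> B e) \<or> (\<not> A e \<and> C e))" by (intro cp_disj cp_conj cp_not)
  then show ?thesis unfolding cp_def by (rule cmp_eq) auto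
qed

lemma diag_simps:
  "Pos (AEq u v) \<in> diag G \<longleftrightarrow> u \<in> fst G \<and> v \<in> fst G \<and> u = v"
  "Neg (AEq u v) \<in> diag G \<longleftrightarrow> u \<in> fst G \<and> v \<in> fst G \<and> u \<noteq> v"
  "Pos (AE u v) \<in> diag G \<longleftrightarrow> u \<in> fst G \<and> v \<in> fst G \<and> (u, v) \<in> snd G"
  "Neg (AE u v) \<in> diag G \<longleftrightarrow> u \<in> fst G \<and> v \<in> fst G \<and> (u, v) \<notin> snd G"
  by (auto simp: diag_def)

definition memb :: "nat \<Rightarrow> nat \<Rightarrow> bool" where
  "memb c l \<longleftrightarrow> fst (prod_decode (l div 2 div 2)) < csize c \<and> snd (prod_decode (l div 2 div 2)) < csize c \<and>
    (if l div 2 mod 2 = 0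
     then (if l mod 2 = 0 then fst (prod_decode (l div 2 div 2)) = snd (prod_decode (l div 2 div 2))
           else fst (prod_decode (l div 2 div 2)) \<noteq> snd (prod_decode (l div 2 div 2)))
     else (if l mod 2 = 0 then cedge c (fst (prod_decode (l div 2 div 2))) (snd (prod_decode (l div 2 div 2)))
           else \<not> cedge c (fst (prod_decode (l div 2 div 2))) (snd (prod_decode (l div 2 div 2)))))"

lemma memb_iff: "lit_of l \<in> diag (dg c) \<longleftrightarrow> memb c l"
  unfolding lit_of_def memb_def Let_def
  by (auto simp: diag_simps dg_def)

lemma cp_memb: "cmp n f \<Longrightarrow> cmp n g \<Longrightarrow> cp n (\<lambda>e. memb (f e) (g e))"
proof -
  have "cp 2 (\<lambda>e. memb (e 0) (e 1))"
    unfolding memb_def by (intro cr cp_if cmp_pfst cmp_psnd cmp_csize cp_cedge) auto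
  then show "cmp n f \<Longrightarrow> cmp n g \<Longrightarrow> cp n (\<lambda>e. memb (f e) (g e))" by (rule cp_app2)
qed

lemma ce_of_cp:
  assumes "cp 1 (\<lambda>e. P (e 0))"
  shows "ce {x. P x}"
proof -
  have "cp 1 (\<lambda>e. \<not> P (e 0))" by (rule cp_not[OF assms])
  then obtain r where r: "\<forall>e. eval r (map e [0..<1]) (if \<not> P (e 0) then 1 else 0)"
    unfolding cp_def cmp_def by blast
  have r1: "eval r [x] (if \<not> P x then 1 else 0)" for x using r[rule_format, of "\<lambda>_. x"] by simp
  let ?F = "Mn (Cn r [Proj 1])"
  have "x \<in> {x. P x} \<longleftrightarrow> (\<exists>y. eval ?F [x] y)" for x
  proof
    assume "x \<in> {x. P x}"
    then have "eval r [x] 0" using r1[of x] by simp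
    moreover have "eval (Proj 1) [0, x] x" using eval_Proj[of 1 "[0, x]"] by simp
    ultimately have "eval (Cn r [Proj 1]) [0, x] 0"
      by (intro eval_Cn[where ys = "[x]"]) auto
    then have "eval ?F [x] 0" by (intro eval_Mn) auto
    then show "\<exists>y. eval ?F [x] y" by blast
  next
    assume "\<exists>y. eval ?F [x] y"
    then obtain y where "eval ?F [x] y" by blast
    then have "eval (Cn r [Proj 1]) [y, x] 0" by (cases rule: eval.cases) auto
    then obtain ys where ys: "length ys = 1" "eval (Proj 1) [y, x] (ys ! 0)" "eval r ys 0"
      by (cases rule: eval.cases) auto
    have "eval (Proj 1) [y, x] x" using eval_Proj[of 1 "[y, x]"] by simp
    then have "ys ! 0 = x" using eval_det[OF ys(2)] by simp
    then have "ys = [x]" using ys(1) by (cases ys) auto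
    then have "(if \<not> P x then 1 else 0) = (0::nat)" using eval_det[OF r1[of x]] ys(3) by simp
    then show "x \<in> {x. P x}" by (simp split: if_splits)
  qed
  then show ?thesis unfolding ce_def by blast
qed

definition Enum0 :: "(nat \<times> literal) set" where
  "Enum0 = {(n, \<phi>). \<phi> \<in> diag (Gseq n)}"

lemma Enum0_codes: "pair_code ` Enum0 = {x. memb (cs (fst (prod_decode x))) (snd (prod_decode x))}"
proof (intro set_eqI iffI)
  fix x assume "x \<in> pair_code ` Enum0"
  then obtain n \<phi> where "\<phi> \<in> diag (Gseq n)" "x = prod_encode (n, lit_code \<phi>)"
    unfolding Enum0_def pair_code_def by auto
  then show "x \<in> {x. memb (cs (fst (prod_decode x))) (snd (prod_decode x))}"
    using memb_iff[of "lit_code \<phi>" "cs n"] by (simp add: lit_of_code Gseq_def)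
next
  fix x assume "x \<in> {x. memb (cs (fst (prod_decode x))) (snd (prod_decode x))}"
  then have m: "lit_of (snd (prod_decode x)) \<in> diag (Gseq (fst (prod_decode x)))"
    using memb_iff by (simp add: Gseq_def)
  have "x = pair_code (fst (prod_decode x), lit_of (snd (prod_decode x)))"
    unfolding pair_code_def by (simp add: code_lit_of)
  then show "x \<in> pair_code ` Enum0" using m unfolding Enum0_def by blast
qed

lemma ce_Enum0: "ce (pair_code ` Enum0)"
proof -
  have "cp 1 (\<lambda>e. memb (cs (fst (prod_decode (e 0)))) (snd (prod_decode (e 0))))"
    by (intro cp_memb cmp_cs cmp_pfst cmp_psnd cmp_proj) auto
  then show ?thesis unfolding Enum0_codes by (rule ce_of_cp)
qed

theorem lemma2p4:
  shows "\<exists>Enum Gs. friedberg_FUG Enum Gs \<and>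
     (\<forall>G G' m n. fug G \<and> fug G' \<and> proper_substructure G G' \<and>
        graph_iso G (Gs m) \<and> graph_iso G' (Gs n) \<longrightarrow> m < n)"
proof (intro exI conjI)
  show "friedberg_FUG Enum0 Gseq"
    unfolding friedberg_FUG_def computable_enumeration_FUG_def
  proof (intro conjI allI impI)
    show "ce (pair_code ` Enum0)" by (rule ce_Enum0)
    fix n show "fug (Gseq n)" by (rule fug_Gs)
    show "{\<phi>. (n, \<phi>) \<in> Enum0} = diag (Gseq n)" by (simp add: Enum0_def)
  next
    fix G assume "fug G" then show "\<exists>n. graph_iso G (Gseq n)" by (rule exists_Gs)
  next
    fix G assume "fug G" then show "\<exists>!n. graph_iso G (Gseq n)"
      using exists_Gs unique_Gs by blast
  qed
  show "\<forall>G G' m n. fug G \<and> fug G' \<and> proper_substructure G G' \<and>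
        graph_iso G (Gseq m) \<and> graph_iso G' (Gseq n) \<longrightarrow> m < n"
    using order_Gs by blast
qed


end
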